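(* Let $\mathfrak{g}$ be a finite-dimensional Lie algebra over a field $K$ of characteristic zero admitting a nondegenerate inner CPA-structure. Then $\mathfrak{g}$ is metabelian, i.e. $[[\mathfrak{g},\mathfrak{g}],[\mathfrak{g},\mathfrak{g}]]=0$.
   Context: A CPA-structure on $\mathfrak{g}$ is a bilinear product $x\cdot y$ satisfying, for all $x,y,z$: $x\cdot y=y\cdot x$; $[x,y]\cdot z=x\cdot(y\cdot z)-y\cdot(x\cdot z)$; $x\cdot[y,z]=[x\cdot y,z]+[y,x\cdot z]$. It is inner if $x\cdot y=[\phi(x),y]$ for some Lie algebra homomorphism $\phi:\mathfrak{g}\to\mathfrak{g}$, and nondegenerate if $\{x\mid x\cdot y=0\ \forall y\}=0$. *)

theory Defs
  imports Main "HOL.Vector_Spaces"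
begin

definition lie_algebra :: "('k::field \<Rightarrow> 'v::ab_group_add \<Rightarrow> 'v) \<Rightarrow> ('v \<Rightarrow> 'v \<Rightarrow> 'v) \<Rightarrow> bool" where
  "lie_algebra scale br \<longleftrightarrow>
     vector_space scale \<and>
     (\<forall>y. Vector_Spaces.linear scale scale (\<lambda>x. br x y)) \<and>
     (\<forall>x. Vector_Spaces.linear scale scale (\<lambda>y. br x y)) \<and>
     (\<forall>x. br x x = 0) \<and>
     (\<forall>x y z. br x (br y z) + br y (br z x) + br z (br x y) = 0)"

definition fin_dim_space :: "('k::field \<Rightarrow> 'v::ab_group_add \<Rightarrow> 'v) \<Rightarrow> bool" where
  "fin_dim_space scale \<longleftrightarrow> (\<exists>B. finite B \<and> module.span scale B = UNIV)"

definition lie_hom :: "('k::field \<Rightarrow> 'v::ab_group_add \<Rightarrow> 'v) \<Rightarrow> ('v \<Rightarrow> 'v \<Rightarrow> 'v) \<Rightarrow> ('v \<Rightarrow> 'v) \<Rightarrow> bool" where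
  "lie_hom scale br \<phi> \<longleftrightarrow> Vector_Spaces.linear scale scale \<phi> \<and> (\<forall>x y. \<phi> (br x y) = br (\<phi> x) (\<phi> y))"

definition cpa_structure :: "('k::field \<Rightarrow> 'v::ab_group_add \<Rightarrow> 'v) \<Rightarrow> ('v \<Rightarrow> 'v \<Rightarrow> 'v) \<Rightarrow> ('v \<Rightarrow> 'v \<Rightarrow> 'v) \<Rightarrow> bool" where
  "cpa_structure scale br pr \<longleftrightarrow>
     (\<forall>y. Vector_Spaces.linear scale scale (\<lambda>x. pr x y)) \<and>
     (\<forall>x. Vector_Spaces.linear scale scale (\<lambda>y. pr x y)) \<and>
     (\<forall>x y. pr x y = pr y x) \<and>
     (\<forall>x y z. pr (br x y) z = pr x (pr y z) - pr y (pr x z)) \<and>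
     (\<forall>x y z. pr x (br y z) = br (pr x y) z + br y (pr x z))"

definition inner_cpa :: "('k::field \<Rightarrow> 'v::ab_group_add \<Rightarrow> 'v) \<Rightarrow> ('v \<Rightarrow> 'v \<Rightarrow> 'v) \<Rightarrow> ('v \<Rightarrow> 'v \<Rightarrow> 'v) \<Rightarrow> bool" where
  "inner_cpa scale br pr \<longleftrightarrow> (\<exists>\<phi>. lie_hom scale br \<phi> \<and> (\<forall>x y. pr x y = br (\<phi> x) y))"

definition nondegenerate_cpa :: "('v::ab_group_add \<Rightarrow> 'v \<Rightarrow> 'v) \<Rightarrow> bool" where
  "nondegenerate_cpa pr \<longleftrightarrow> {x. \<forall>y. pr x y = 0} = {0}"

definition derived :: "('k::field \<Rightarrow> 'v::ab_group_add \<Rightarrow> 'v) \<Rightarrow> ('v \<Rightarrow> 'v \<Rightarrow> 'v) \<Rightarrow> 'v set" where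
  "derived scale br = module.span scale {br x y | x y. True}"

definition metabelian :: "('k::field \<Rightarrow> 'v::ab_group_add \<Rightarrow> 'v) \<Rightarrow> ('v \<Rightarrow> 'v \<Rightarrow> 'v) \<Rightarrow> bool" where
  "metabelian scale br \<longleftrightarrow> (\<forall>x\<in>derived scale br. \<forall>y\<in>derived scale br. br x y = 0)"

end

theory Submission
  imports Defs
begin

lemma twox: "(- x::'a::ab_group_add) + y = 0 \<Longrightarrow> x + y = 0 \<Longrightarrow> x + x = 0"
proof -
  assume a: "- x + y = 0" and b: "x + y = 0"
  have "x + x = (x + y) - (- x + y)" by (simp add: algebra_simps)
  also have "\<dots> = 0" by (simp only: a b diff_self)
  finally show ?thesis .
qed

lemma key:
  fixes br :: "'v::ab_group_add \<Rightarrow> 'v \<Rightarrow> 'v" and D :: "'v \<Rightarrow> 'v"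
  assumes negl: "\<And>x y. br (- x) y = - br x y"
    and negr: "\<And>x y. br x (- y) = - br x y"
    and antisym: "\<And>x y. br y x = - br x y"
    and jac: "\<And>x y z. br (br x y) z = br x (br y z) - br y (br x z)"
    and S: "\<And>x y. br (D x) y = - br x (D y)"
    and H: "\<And>x y. D (br x y) = br (D x) (D y)"
    and N: "\<And>x. D x = 0 \<Longrightarrow> x = 0"
    and two: "\<And>x::'v. x + x = 0 \<Longrightarrow> x = 0"
  shows "br (br a b) (br c d) = 0"
proof -
  define U where "U = (\<lambda>a b c d. br (br a b) (br c d))"
  have S': "\<And>x y. br x (D y) = - br (D x) y" using S by (metis minus_minus)
  have Dw: "\<And>c d. D (br c d) = - br (D (D c)) d"
  proof -
    fix c d
    have "D (br c d) = br (D c) (D d)" by (rule H)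
    also have "\<dots> = - br (D (D c)) d" by (rule S')
    finally show "D (br c d) = - br (D (D c)) d" .
  qed
  have D2w: "\<And>c d. D (D (br c d)) = br (D (D (D (D c)))) d"
  proof -
    fix c d
    have "D (D (br c d)) = br (D (D c)) (D (D d))" by (simp add: H)
    also have "\<dots> = - br (D (D (D c))) (D d)" by (rule S')
    also have "\<dots> = br (D (D (D (D c)))) d" by (simp add: S')
    finally show "D (D (br c d)) = br (D (D (D (D c)))) d" .
  qed
  have E1: "\<And>a b c d. U (D a) b c d + U a (D b) c d = 0"
    by (simp add: U_def S negl)
  have E2: "\<And>a b c d. U (D a) b c d + U a (D b) c d
      = U a b (D (D c)) d + U a b (D (D (D (D c)))) d"
  proof -
    fix a b c d
    let ?w = "br c d" and ?w2 = "br (D (D c)) d" and ?w4 = "br (D (D (D (D c)))) d"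
    have t1: "br (D a) (br b ?w) = br a (br b ?w4)"
    proof -
      have "br (D a) (br b ?w) = - br a (D (br b ?w))" by (rule S)
      also have "\<dots> = - br a (br (D b) (D ?w))" by (simp add: H)
      also have "\<dots> = br a (br b (D (D ?w)))" by (simp add: S' negr)
      also have "\<dots> = br a (br b ?w4)" by (simp add: D2w)
      finally show ?thesis .
    qed
    have t2: "br b (br (D a) ?w) = br b (br a ?w2)"
      by (simp add: S Dw negr)
    have t3: "br a (br (D b) ?w) = br a (br b ?w2)"
      by (simp add: S Dw negr)
    have t4: "br (D b) (br a ?w) = br b (br a ?w4)"
    proof -
      have "br (D b) (br a ?w) = - br b (D (br a ?w))" by (rule S)
      also have "\<dots> = - br b (br (D a) (D ?w))" by (simp add: H)
      also have "\<dots> = br b (br a (D (D ?w)))" by (simp add: S negr)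
      also have "\<dots> = br b (br a ?w4)" by (simp add: D2w)
      finally show ?thesis .
    qed
    have "U (D a) b c d + U a (D b) c d
        = (br (D a) (br b ?w) - br b (br (D a) ?w)) + (br a (br (D b) ?w) - br (D b) (br a ?w))"
      by (simp add: U_def jac)
    also have "\<dots> = (br a (br b ?w4) - br b (br a ?w4)) + (br a (br b ?w2) - br b (br a ?w2))"
      by (simp add: t1 t2 t3 t4)
    also have "\<dots> = U a b (D (D c)) d + U a b (D (D (D (D c)))) d"
      by (simp add: U_def jac)
    finally show "U (D a) b c d + U a (D b) c d
      = U a b (D (D c)) d + U a b (D (D (D (D c)))) d" .
  qed
  have E3: "\<And>a b c d. U a b (D (D c)) d + U a b (D (D (D (D c)))) d = 0"
    using E1 E2 by metis
  have swap: "\<And>a b c d. U c d a b = - U a b c d" unfolding U_def by (rule antisym)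
  have E4: "\<And>a b c d. U (D (D a)) b c d + U (D (D (D (D a)))) b c d = 0"
  proof -
    fix a b c d
    have "U c d (D (D a)) b + U c d (D (D (D (D a)))) b = 0" by (rule E3)
    moreover have "U c d (D (D a)) b = - U (D (D a)) b c d" by (rule swap)
    moreover have "U c d (D (D (D (D a)))) b = - U (D (D (D (D a)))) b c d" by (rule swap)
    ultimately have h: "- U (D (D a)) b c d + - U (D (D (D (D a)))) b c d = 0" by simp
    have "U (D (D a)) b c d + U (D (D (D (D a)))) b c d = - (- U (D (D a)) b c d + - U (D (D (D (D a)))) b c d)"
      by (simp add: algebra_simps)
    also have "\<dots> = 0" by (simp only: h minus_zero)
    finally show "U (D (D a)) b c d + U (D (D (D (D a)))) b c d = 0" .
  qed
  have E5: "\<And>a b c d. U (D (D a)) b c d = - U a b (D (D c)) d"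
  proof -
    fix a b c d
    have "U (D a) (D b) c d = br (D (br a b)) (br c d)" by (simp add: U_def H)
    also have "\<dots> = - br (br a b) (D (br c d))" by (rule S)
    also have "\<dots> = - U a b (D c) (D d)" by (simp add: U_def H)
    finally have h1: "U (D a) (D b) c d = - U a b (D c) (D d)" .
    have h2: "U (D a) (D b) c d = - U (D (D a)) b c d"
      by (simp add: U_def S' negl)
    have h3: "U a b (D c) (D d) = - U a b (D (D c)) d"
      by (simp add: U_def S' negr)
    have "U (D (D a)) b c d = - U (D a) (D b) c d" by (simp only: h2 minus_minus)
    also have "\<dots> = U a b (D c) (D d)" by (simp only: h1 minus_minus)
    also have "\<dots> = - U a b (D (D c)) d" by (rule h3)
    finally show "U (D (D a)) b c d = - U a b (D (D c)) d" .
  qed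
  have E6: "\<And>a b c d. U a b (D (D (D (D c)))) d = U (D (D (D (D a)))) b c d"
  proof -
    fix a b c d
    have "U a b (D (D (D (D c)))) d = - U (D (D a)) b (D (D c)) d"
      by (simp only: E5[of a b "D (D c)" d] minus_minus)
    also have "\<dots> = U (D (D (D (D a)))) b c d" by (simp only: E5[of "D (D a)" b c d])
    finally show "U a b (D (D (D (D c)))) d = U (D (D (D (D a)))) b c d" .
  qed
  have E7: "\<And>a b c d. U (D (D a)) b c d = 0"
  proof -
    fix a b c d
    have q1: "U a b (D (D c)) d = - U (D (D a)) b c d" by (simp only: E5[of a b c d] minus_minus)
    have r1: "- U (D (D a)) b c d + U (D (D (D (D a)))) b c d = 0"
      using E3[of a b c d] by (simp only: q1 E6[of a b c d])
    have r2: "U (D (D a)) b c d + U (D (D (D (D a)))) b c d = 0" by (rule E4)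
    have "U (D (D a)) b c d + U (D (D a)) b c d = 0" by (rule twox[OF r1 r2])
    thus "U (D (D a)) b c d = 0" by (rule two)
  qed
  have "D (D (U a b c d)) = U (D (D a)) (D (D b)) (D (D c)) (D (D d))"
    by (simp add: U_def H)
  also have "\<dots> = 0" by (rule E7)
  finally have "D (D (U a b c d)) = 0" .
  hence "D (U a b c d) = 0" by (rule N)
  hence "U a b c d = 0" by (rule N)
  thus ?thesis unfolding U_def .
qed

theorem corollary2p15:
  fixes scale :: "'k::field_char_0 \<Rightarrow> 'v::ab_group_add \<Rightarrow> 'v"
    and br pr :: "'v \<Rightarrow> 'v \<Rightarrow> 'v"
  assumes "lie_algebra scale br"
    and "fin_dim_space scale"
    and "cpa_structure scale br pr"
    and "inner_cpa scale br pr"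
    and "nondegenerate_cpa pr"
  shows "metabelian scale br"
proof -
  have LA: "vector_space scale \<and>
     (\<forall>y. Vector_Spaces.linear scale scale (\<lambda>x. br x y)) \<and>
     (\<forall>x. Vector_Spaces.linear scale scale (\<lambda>y. br x y)) \<and>
     (\<forall>x. br x x = 0) \<and>
     (\<forall>x y z. br x (br y z) + br y (br z x) + br z (br x y) = 0)"
    using assms(1) unfolding lie_algebra_def .
  have vs: "vector_space scale" using LA by blast
  have l1: "\<And>y. Vector_Spaces.linear scale scale (\<lambda>x. br x y)" using LA by blast
  have l2: "\<And>x. Vector_Spaces.linear scale scale (\<lambda>y. br x y)" using LA by blast
  have alt: "\<And>x. br x x = 0" using LA by blast
  have jac0: "\<And>x y z. br x (br y z) + br y (br z x) + br z (br x y) = 0" using LA by blast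
  have addl: "\<And>x y z. br (x + y) z = br x z + br y z"
    using l1 unfolding linear_iff by blast
  have scl: "\<And>c x z. br (scale c x) z = scale c (br x z)"
    using l1 unfolding linear_iff by blast
  have addr: "\<And>x y z. br z (x + y) = br z x + br z y"
    using l2 unfolding linear_iff by blast
  have scr: "\<And>c x z. br z (scale c x) = scale c (br z x)"
    using l2 unfolding linear_iff by blast
  have zl: "\<And>y. br 0 y = 0"
  proof -
    fix y have "br 0 y = br (0 + 0) y" by simp
    also have "\<dots> = br 0 y + br 0 y" by (rule addl)
    finally have "br 0 y = br 0 y + br 0 y" .
    thus "br 0 y = 0" by simp
  qed
  have zr: "\<And>y. br y 0 = 0"
  proof -
    fix y have "br y 0 = br y (0 + 0)" by simp
    also have "\<dots> = br y 0 + br y 0" by (rule addr)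
    finally have "br y 0 = br y 0 + br y 0" .
    thus "br y 0 = 0" by simp
  qed
  have negl: "\<And>x y. br (- x) y = - br x y"
  proof -
    fix x y have "br (- x) y + br x y = br (- x + x) y" by (rule addl[symmetric])
    hence "br (- x) y + br x y = 0" using zl by simp
    thus "br (- x) y = - br x y" by (simp add: eq_neg_iff_add_eq_0)
  qed
  have negr: "\<And>x y. br x (- y) = - br x y"
  proof -
    fix x y have "br x (- y) + br x y = br x (- y + y)" by (rule addr[symmetric])
    hence "br x (- y) + br x y = 0" using zr by simp
    thus "br x (- y) = - br x y" by (simp add: eq_neg_iff_add_eq_0)
  qed
  have antisym: "\<And>x y. br y x = - br x y"
  proof -
    fix x y
    have "br (x + y) (x + y) = br x x + br y x + (br x y + br y y)" by (simp only: addl addr)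
    hence "0 = br x y + br y x" by (simp add: alt add.commute)
    hence "br x y + br y x = 0" by (rule sym)
    thus "br y x = - br x y" by (metis add.commute eq_neg_iff_add_eq_0)
  qed
  have jac: "\<And>x y z. br (br x y) z = br x (br y z) - br y (br x z)"
  proof -
    fix x y z
    have "br (br x y) z = - br z (br x y)" by (rule antisym)
    also have "\<dots> = br x (br y z) + br y (br z x)"
    proof (rule minus_unique)
      show "br z (br x y) + (br x (br y z) + br y (br z x)) = 0"
        using jac0[of x y z] by (simp add: algebra_simps)
    qed
    also have "\<dots> = br x (br y z) - br y (br x z)" by (simp add: antisym[of x z] negr)
    finally show "br (br x y) z = br x (br y z) - br y (br x z)" .
  qed
  obtain \<phi> where hom: "lie_hom scale br \<phi>" and pr: "\<And>x y. pr x y = br (\<phi> x) y"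
    using assms(4) unfolding inner_cpa_def by blast
  have H: "\<And>x y. \<phi> (br x y) = br (\<phi> x) (\<phi> y)" using hom unfolding lie_hom_def by blast
  have comm: "\<And>x y. pr x y = pr y x" using assms(3) unfolding cpa_structure_def by blast
  have S: "\<And>x y. br (\<phi> x) y = - br x (\<phi> y)"
  proof -
    fix x y
    have "br (\<phi> x) y = pr x y" by (rule pr[symmetric])
    also have "\<dots> = pr y x" by (rule comm)
    also have "\<dots> = br (\<phi> y) x" by (rule pr)
    also have "\<dots> = - br x (\<phi> y)" by (rule antisym)
    finally show "br (\<phi> x) y = - br x (\<phi> y)" .
  qed
  have N: "\<And>x. \<phi> x = 0 \<Longrightarrow> x = 0"
  proof -
    fix x assume "\<phi> x = 0"
    hence "x \<in> {x. \<forall>y. pr x y = 0}" by (simp add: pr zl)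
    thus "x = 0" using assms(5) unfolding nondegenerate_cpa_def by auto
  qed
  have two: "\<And>x::'v. x + x = 0 \<Longrightarrow> x = 0"
  proof -
    fix x :: 'v assume h: "x + x = 0"
    have m: "module scale" using vs by (simp add: vector_space_def module_def)
    have "scale (1/2) (x + x) = scale (1/2) x + scale (1/2) x" by (rule module.scale_right_distrib[OF m])
    also have "\<dots> = scale (1/2 + 1/2) x" by (rule module.scale_left_distrib[OF m, symmetric])
    also have "\<dots> = scale 1 x" by simp
    also have "\<dots> = x" by (rule module.scale_one[OF m])
    finally have "x = scale (1/2) (x + x)" by (rule sym)
    also have "\<dots> = scale (1/2) 0" by (simp only: h)
    also have "\<dots> = 0" by (rule module.scale_zero_right[OF m])
    finally show "x = 0" .
  qed
  have K: "\<And>a b c d. br (br a b) (br c d) = 0"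
    by (rule key[where br=br and D=\<phi>, OF negl negr antisym jac S H N two])
  interpret vector_space scale by (rule vs)
  have inner: "\<And>a b y. y \<in> derived scale br \<Longrightarrow> br (br a b) y = 0"
  proof -
    fix a b y assume "y \<in> derived scale br"
    hence "y \<in> span {br x y | x y. True}" by (simp add: derived_def)
    thus "br (br a b) y = 0"
    proof (induct rule: span_induct)
      case base show ?case by (rule subspaceI) (auto simp: zr addr scr)
    next
      case (step x) thus ?case using K by auto
    qed
  qed
  show ?thesis unfolding metabelian_def
  proof (intro ballI)
    fix x y assume x: "x \<in> derived scale br" and y: "y \<in> derived scale br"
    from x have "x \<in> span {br x y | x y. True}" by (simp add: derived_def)
    thus "br x y = 0"
    proof (induct rule: span_induct)
      case base show ?case by (rule subspaceI) (auto simp: zl addl scl)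
    next
      case (step x) thus ?case using inner y by auto
    qed
  qed
qed

end
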